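(* Let $\mathcal{X}\subseteq\mathbb{R}^d$ be a nonempty closed convex bounded set with $R\ge\max_{x,y\in\mathcal{X}}\|x-y\|$, and consider the iterates $x_t,z_t$ and step sizes $\gamma_t$ of Algorithm AdaPEG (described in the context) run with arbitrary oracle answers $\widehat{F(x_t)}\in\mathbb{R}^d$. Then for all $y\in\mathcal{X}$, \[\sum_{t=1}^T\langle\widehat{F(x_t)},x_t-y\rangle\le\frac12R^2\gamma_0+\left(\frac12\frac{R^2}{\eta}+2\eta\right)\sqrt{\sum_{t=1}^T\left\|\widehat{F(x_t)}-\widehat{F(x_{t-1})}\right\|^2}-\frac12\sum_{t=1}^T\gamma_{t-1}\left(\|x_t-z_{t-1}\|^2+\|x_{t-1}-z_{t-1}\|^2\right).\]
   Context: $\|\cdot\|$ is the Euclidean norm. Algorithm AdaPEG: $x_0=z_0\in\mathcal{X}$, $\gamma_0\ge0$, $\eta>0$. For $t=1,\dots,T$: $x_t=\arg\min_{u\in\mathcal{X}}\{\langle\widehat{F(x_{t-1})},u\rangle+\tfrac12\gamma_{t-1}\|u-z_{t-1}\|^2\}$; $\gamma_t=\frac1\eta\sqrt{\eta^2\gamma_0^2+\sum_{s=1}^t\|\widehat{F(x_s)}-\widehat{F(x_{s-1})}\|^2}$; $z_t=\arg\min_{u\in\mathcal{X}}\{\langle\widehat{F(x_t)},u\rangle+\tfrac12\gamma_{t-1}\|u-z_{t-1}\|^2+\tfrac12(\gamma_t-\gamma_{t-1})\|u-x_t\|^2\}$. *)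

theory Defs
  imports "HOL-Analysis.Analysis"
begin

text \<open>Step size of AdaPEG. The oracle answers are a sequence g, where g t stands for
the (arbitrary) oracle answer at x_t.\<close>
definition adapeg_gamma :: "real \<Rightarrow> real \<Rightarrow> (nat \<Rightarrow> real ^ 'd) \<Rightarrow> nat \<Rightarrow> real" where
  "adapeg_gamma \<gamma>0 \<eta> g t =
     (1 / \<eta>) * sqrt (\<eta>\<^sup>2 * \<gamma>0\<^sup>2 + (\<Sum>s\<in>{1..t}. (norm (g s - g (s - 1)))\<^sup>2))"

definition is_minimizer_on :: "'a set \<Rightarrow> ('a \<Rightarrow> real) \<Rightarrow> 'a \<Rightarrow> bool" where
  "is_minimizer_on X phi u \<longleftrightarrow> u \<in> X \<and> (\<forall>v\<in>X. phi u \<le> phi v)"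

definition adapeg_iterates ::
  "(real ^ 'd) set \<Rightarrow> real \<Rightarrow> real \<Rightarrow> nat \<Rightarrow> (nat \<Rightarrow> real ^ 'd) \<Rightarrow> (nat \<Rightarrow> real ^ 'd)
     \<Rightarrow> (nat \<Rightarrow> real ^ 'd) \<Rightarrow> bool" where
  "adapeg_iterates X \<gamma>0 \<eta> T g x z \<longleftrightarrow>
     x 0 \<in> X \<and> z 0 = x 0 \<and>
     (\<forall>t\<in>{1..T}.
        is_minimizer_on X
          (\<lambda>u. inner (g (t - 1)) u + (1/2) * adapeg_gamma \<gamma>0 \<eta> g (t - 1) * (norm (u - z (t - 1)))\<^sup>2)
          (x t) \<and>
        is_minimizer_on X
          (\<lambda>u. inner (g t) u + (1/2) * adapeg_gamma \<gamma>0 \<eta> g (t - 1) * (norm (u - z (t - 1)))\<^sup>2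
               + (1/2) * (adapeg_gamma \<gamma>0 \<eta> g t - adapeg_gamma \<gamma>0 \<eta> g (t - 1)) * (norm (u - x t))\<^sup>2)
          (z t))"

end

theory Submission
  imports Defs
begin


lemma lin_nonneg:
  fixes L M :: real
  assumes "\<And>s. 0 < s \<Longrightarrow> s \<le> 1 \<Longrightarrow> 0 \<le> s * L + s\<^sup>2 * M"
  shows "0 \<le> L"
proof (rule ccontr)
  assume "\<not> 0 \<le> L"
  hence L: "L < 0" by simp
  define K where "K = 2 * (\<bar>M\<bar> + 1)"
  have K: "0 < K" by (simp add: K_def add_nonneg_pos)
  define s where "s = min 1 ((- L) / K)"
  have sp: "0 < s" using L K unfolding s_def by (simp add: divide_neg_pos)
  have s1: "s \<le> 1" by (simp add: s_def)
  have "s \<le> (- L) / K" by (simp add: s_def)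
  hence "s * K \<le> - L" using K by (metis pos_le_divide_eq)
  hence "s * (2 * (\<bar>M\<bar> + 1)) \<le> - L" by (simp add: K_def)
  moreover have "s * \<bar>M\<bar> < s * (2 * (\<bar>M\<bar> + 1))" using sp by (intro mult_strict_left_mono) auto
  moreover have "s * M \<le> s * \<bar>M\<bar>" using sp by (intro mult_left_mono) auto
  ultimately have "L + s * M < 0" by linarith
  hence "s * (L + s * M) < 0" using sp by (simp add: mult_pos_neg)
  moreover have "0 \<le> s * (L + s * M)" using assms[OF sp s1] by (simp add: power2_eq_square algebra_simps)
  ultimately show False by simp
qed

lemma quad_expand:
  fixes c u p1 p2 d :: "'a::real_inner"
  shows "inner c (u + s *\<^sub>R d) + k1/2 * (norm (u + s *\<^sub>R d - p1))\<^sup>2 + k2/2 * (norm (u + s *\<^sub>R d - p2))\<^sup>2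
    = (inner c u + k1/2 * (norm (u - p1))\<^sup>2 + k2/2 * (norm (u - p2))\<^sup>2)
      + s * inner (c + k1 *\<^sub>R (u - p1) + k2 *\<^sub>R (u - p2)) d + s\<^sup>2 * ((k1 + k2)/2 * (norm d)\<^sup>2)"
  unfolding power2_norm_eq_inner
  by (simp add: inner_add_left inner_add_right inner_diff_left inner_diff_right algebra_simps power2_eq_square inner_commute)

lemma vi_quad:
  fixes c u p1 p2 :: "'a::real_inner"
  assumes "convex X" "u \<in> X" "v \<in> X"
    and min: "\<forall>w\<in>X. inner c u + k1/2 * (norm (u - p1))\<^sup>2 + k2/2 * (norm (u - p2))\<^sup>2
             \<le> inner c w + k1/2 * (norm (w - p1))\<^sup>2 + k2/2 * (norm (w - p2))\<^sup>2"
  shows "0 \<le> inner (c + k1 *\<^sub>R (u - p1) + k2 *\<^sub>R (u - p2)) (v - u)"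
proof (rule lin_nonneg[where M = "(k1 + k2)/2 * (norm (v - u))\<^sup>2"])
  fix s :: real assume s: "0 < s" "s \<le> 1"
  have "u + s *\<^sub>R (v - u) = (1 - s) *\<^sub>R u + s *\<^sub>R v" by (simp add: algebra_simps)
  hence "u + s *\<^sub>R (v - u) \<in> X" using assms(1-3) s by (simp add: convex_def)
  from min[rule_format, OF this] show "0 \<le> s * inner (c + k1 *\<^sub>R (u - p1) + k2 *\<^sub>R (u - p2)) (v - u) + s\<^sup>2 * ((k1 + k2)/2 * (norm (v - u))\<^sup>2)"
    unfolding quad_expand by simp
qed



lemma step_ineq:
  fixes gp gc xc zc zp y :: "'a::real_inner"
  assumes h1: "0 \<le> inner (gp + a *\<^sub>R (xc - zp)) (zc - xc)"
    and h2: "0 \<le> inner (gc + a *\<^sub>R (zc - zp) + (b - a) *\<^sub>R (zc - xc)) (y - zc)"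
  shows "inner gc (xc - y) \<le> inner (gc - gp) (xc - zc) + a/2 * (norm (y - zp))\<^sup>2 - b/2 * (norm (y - zc))\<^sup>2
     + (b - a)/2 * (norm (y - xc))\<^sup>2 - a/2 * (norm (xc - zp))\<^sup>2 - b/2 * (norm (xc - zc))\<^sup>2"
proof -
  have "inner (gc - gp) (xc - zc) + a/2 * (norm (y - zp))\<^sup>2 - b/2 * (norm (y - zc))\<^sup>2
     + (b - a)/2 * (norm (y - xc))\<^sup>2 - a/2 * (norm (xc - zp))\<^sup>2 - b/2 * (norm (xc - zc))\<^sup>2 - inner gc (xc - y)
     = inner (gp + a *\<^sub>R (xc - zp)) (zc - xc) + inner (gc + a *\<^sub>R (zc - zp) + (b - a) *\<^sub>R (zc - xc)) (y - zc)"
    unfolding power2_norm_eq_inner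
    by (simp add: inner_add_left inner_add_right inner_diff_left inner_diff_right algebra_simps inner_commute) (simp add: field_simps)
  thus ?thesis using h1 h2 by linarith
qed

lemma step_close:
  fixes gp gc xc zc zp :: "'a::real_inner"
  assumes h1: "0 \<le> inner (gp + a *\<^sub>R (xc - zp)) (zc - xc)"
    and h3: "0 \<le> inner (gc + a *\<^sub>R (zc - zp) + (b - a) *\<^sub>R (zc - xc)) (xc - zc)"
  shows "b * (norm (xc - zc))\<^sup>2 \<le> inner (gc - gp) (xc - zc)"
proof -
  have "inner (gc - gp) (xc - zc) - b * (norm (xc - zc))\<^sup>2
     = inner (gp + a *\<^sub>R (xc - zp)) (zc - xc) + inner (gc + a *\<^sub>R (zc - zp) + (b - a) *\<^sub>R (zc - xc)) (xc - zc)"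
    unfolding power2_norm_eq_inner
    by (simp add: inner_add_left inner_add_right inner_diff_left inner_diff_right algebra_simps inner_commute)
  thus ?thesis using h1 h3 by linarith
qed

lemma scalar_bound:
  fixes P b e n Sp \<eta> :: real
  assumes P1: "b * n\<^sup>2 \<le> P" and P2: "P \<le> e * n" and n: "0 \<le> n" and e: "0 \<le> e"
    and b: "sqrt (Sp + e\<^sup>2) / \<eta> \<le> b" and Sp: "0 \<le> Sp" and eta: "0 < \<eta>"
  shows "P \<le> 2 * \<eta> * (sqrt (Sp + e\<^sup>2) - sqrt Sp)"
proof (cases "e = 0")
  case True
  then show ?thesis using P2 by simp
next
  case False
  hence e2: "0 < e\<^sup>2" using e by simp
  define St where "St = Sp + e\<^sup>2"
  have St: "0 < St" unfolding St_def using add_nonneg_pos[OF Sp e2] .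
  have sqSt: "0 < sqrt St" using St by simp
  have bpos: "0 < b" using b sqSt eta unfolding St_def[symmetric] by (smt (verit) divide_pos_pos)
  have Pb: "P \<le> e\<^sup>2 / b"
  proof (cases "P \<le> 0")
    case True thus ?thesis using bpos by (smt (verit) divide_nonneg_pos e2)
  next
    case False
    hence Pp: "0 < P" by simp
    have "P * P \<le> (e * n) * (e * n)" using P2 Pp by (intro mult_mono) auto
    also have "\<dots> = e\<^sup>2 * n\<^sup>2" by (simp add: power2_eq_square)
    also have "\<dots> \<le> e\<^sup>2 * (P / b)" using P1 bpos e2
      by (intro mult_left_mono) (auto simp: le_divide_eq mult.commute)
    finally have "P * P \<le> e\<^sup>2 * P / b" by simp
    hence "P * P \<le> (e\<^sup>2 / b) * P" by (simp add: mult.commute)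
    thus ?thesis using Pp by (metis mult_le_cancel_right_pos)
  qed
  also have "e\<^sup>2 / b \<le> e\<^sup>2 / (sqrt St / \<eta>)"
  proof -
    have q: "0 < sqrt St / \<eta>" using sqSt eta by simp
    have "0 < b * (sqrt St / \<eta>)" using bpos q by (rule mult_pos_pos)
    moreover have "sqrt St / \<eta> \<le> b" using b unfolding St_def .
    ultimately show ?thesis using divide_left_mono[of "sqrt St / \<eta>" b "e\<^sup>2"] by simp
  qed
  also have "\<dots> = \<eta> * e\<^sup>2 / sqrt St" by simp
  also have "\<dots> \<le> 2 * \<eta> * (sqrt St - sqrt Sp)"
  proof -
    have sSp: "0 \<le> sqrt Sp" using Sp by simp
    have "e\<^sup>2 = (sqrt St - sqrt Sp) * (sqrt St + sqrt Sp)"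
      using St Sp by (simp add: St_def algebra_simps power2_eq_square[symmetric])
    also have "\<dots> \<le> (sqrt St - sqrt Sp) * (2 * sqrt St)"
    proof (intro mult_left_mono)
      show "sqrt St + sqrt Sp \<le> 2 * sqrt St" using St_def e2 by (simp add: real_sqrt_le_mono)
      show "0 \<le> sqrt St - sqrt Sp" using St_def e by (simp add: real_sqrt_le_mono)
    qed
    finally have "e\<^sup>2 \<le> 2 * sqrt St * (sqrt St - sqrt Sp)" by (simp add: algebra_simps)
    hence "\<eta> * e\<^sup>2 \<le> \<eta> * (2 * sqrt St * (sqrt St - sqrt Sp))" using eta by simp
    hence "\<eta> * e\<^sup>2 \<le> (2 * \<eta> * (sqrt St - sqrt Sp)) * sqrt St" by (simp add: algebra_simps)
    thus ?thesis using sqSt by (simp add: divide_le_eq)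
  qed
  finally show ?thesis by (simp add: St_def)
qed


theorem lemmaB5:
  fixes X :: "(real ^ 'd) set" and R \<gamma>0 \<eta> :: real and T :: nat
    and g x z :: "nat \<Rightarrow> real ^ 'd" and y :: "real ^ 'd"
  assumes "X \<noteq> {}" and "closed X" and "convex X" and "bounded X"
    and "\<forall>a\<in>X. \<forall>b\<in>X. norm (a - b) \<le> R"
    and "\<gamma>0 \<ge> 0" and "\<eta> > 0"
    and "adapeg_iterates X \<gamma>0 \<eta> T g x z"
    and "y \<in> X"
  shows "(\<Sum>t\<in>{1..T}. inner (g t) (x t - y))
     \<le> (1/2) * R\<^sup>2 * \<gamma>0
       + ((1/2) * R\<^sup>2 / \<eta> + 2 * \<eta>) * sqrt (\<Sum>t\<in>{1..T}. (norm (g t - g (t - 1)))\<^sup>2)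
       - (1/2) * (\<Sum>t\<in>{1..T}. adapeg_gamma \<gamma>0 \<eta> g (t - 1)
            * ((norm (x t - z (t - 1)))\<^sup>2 + (norm (x (t - 1) - z (t - 1)))\<^sup>2))"
proof -
  define \<Gamma> where "\<Gamma> = adapeg_gamma \<gamma>0 \<eta> g"
  define S where "S = (\<lambda>n. \<Sum>t\<in>{1..n}. (norm (g t - g (t - 1)))\<^sup>2)"
  have eta: "0 < \<eta>" using assms(7) .
  have g0: "0 \<le> \<gamma>0" using assms(6) .
  have Gdef: "\<And>n. \<Gamma> n = sqrt (\<eta>\<^sup>2 * \<gamma>0\<^sup>2 + S n) / \<eta>"
    by (simp add: \<Gamma>_def S_def adapeg_gamma_def)
  have S0: "S 0 = 0" by (simp add: S_def)
  have SSuc: "\<And>n. S (Suc n) = S n + (norm (g (Suc n) - g n))\<^sup>2" by (simp add: S_def)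
  have Snn: "\<And>n. 0 \<le> S n" by (simp add: S_def sum_nonneg)
  have sq0: "sqrt (\<eta>\<^sup>2 * \<gamma>0\<^sup>2) = \<eta> * \<gamma>0"
    using eta g0 by (simp add: real_sqrt_mult)
  have G0: "\<Gamma> 0 = \<gamma>0" using eta by (simp add: Gdef S0 sq0)
  have Gmono: "\<And>n. \<Gamma> n \<le> \<Gamma> (Suc n)"
    unfolding Gdef SSuc using eta by (intro divide_right_mono) auto
  have Glow: "\<And>n. sqrt (S n) / \<eta> \<le> \<Gamma> n"
    unfolding Gdef using eta by (intro divide_right_mono) auto
  have Gnn: "\<And>n. 0 \<le> \<Gamma> n" unfolding Gdef using eta Snn
    by (intro divide_nonneg_pos real_sqrt_ge_zero add_nonneg_nonneg) auto
  have Gup: "\<Gamma> T \<le> \<gamma>0 + sqrt (S T) / \<eta>"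
  proof -
    have "sqrt (\<eta>\<^sup>2 * \<gamma>0\<^sup>2 + S T) \<le> \<eta> * \<gamma>0 + sqrt (S T)"
      using sqrt_add_le_add_sqrt[of "\<eta>\<^sup>2 * \<gamma>0\<^sup>2" "S T"] Snn sq0 by simp
    hence "\<Gamma> T \<le> (\<eta> * \<gamma>0 + sqrt (S T)) / \<eta>" unfolding Gdef using eta
      by (intro divide_right_mono) auto
    also have "\<dots> = \<gamma>0 + sqrt (S T) / \<eta>" using eta by (simp add: add_divide_distrib)
    finally show ?thesis .
  qed
  obtain a0 where a0: "a0 \<in> X" using assms(1) by blast
  have R0: "0 \<le> R" using assms(5) a0 by force
  have it: "x 0 \<in> X" "z 0 = x 0"
    and itT: "\<And>t. t \<in> {1..T} \<Longrightarrow> is_minimizer_on X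
          (\<lambda>u. inner (g (t - 1)) u + (1/2) * \<Gamma> (t - 1) * (norm (u - z (t - 1)))\<^sup>2)
          (x t) \<and>
        is_minimizer_on X
          (\<lambda>u. inner (g t) u + (1/2) * \<Gamma> (t - 1) * (norm (u - z (t - 1)))\<^sup>2
               + (1/2) * (\<Gamma> t - \<Gamma> (t - 1)) * (norm (u - x t))\<^sup>2)
          (z t)"
    using assms(8) unfolding adapeg_iterates_def \<Gamma>_def by auto
  have xX: "\<And>t. t \<le> T \<Longrightarrow> x t \<in> X"
  proof -
    fix t assume "t \<le> T"
    show "x t \<in> X"
    proof (cases "t = 0")
      case True thus ?thesis using it by simp
    next
      case False thus ?thesis using itT[of t] \<open>t \<le> T\<close> by (auto simp: is_minimizer_on_def)
    qed
  qed
  have zX: "\<And>t. t \<le> T \<Longrightarrow> z t \<in> X"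
  proof -
    fix t assume "t \<le> T"
    show "z t \<in> X"
    proof (cases "t = 0")
      case True thus ?thesis using it by simp
    next
      case False thus ?thesis using itT[of t] \<open>t \<le> T\<close> by (auto simp: is_minimizer_on_def)
    qed
  qed
  have VIx: "0 \<le> inner (g (t - 1) + \<Gamma> (t - 1) *\<^sub>R (x t - z (t - 1))) (v - x t)"
    if "1 \<le> t" "t \<le> T" "v \<in> X" for t v
  proof -
    have m: "\<forall>w\<in>X. inner (g (t - 1)) (x t) + (1/2) * \<Gamma> (t - 1) * (norm (x t - z (t - 1)))\<^sup>2
        \<le> inner (g (t - 1)) w + (1/2) * \<Gamma> (t - 1) * (norm (w - z (t - 1)))\<^sup>2"
      using itT[of t] that by (auto simp: is_minimizer_on_def)
    show ?thesis
      using vi_quad[of X "x t" v "g (t - 1)" "\<Gamma> (t - 1)" "z (t - 1)" 0 "z (t - 1)"]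
        m assms(3) xX that by simp
  qed
  have VIz: "0 \<le> inner (g t + \<Gamma> (t - 1) *\<^sub>R (z t - z (t - 1)) + (\<Gamma> t - \<Gamma> (t - 1)) *\<^sub>R (z t - x t)) (v - z t)"
    if "1 \<le> t" "t \<le> T" "v \<in> X" for t v
  proof -
    have m: "\<forall>w\<in>X. inner (g t) (z t) + (1/2) * \<Gamma> (t - 1) * (norm (z t - z (t - 1)))\<^sup>2
               + (1/2) * (\<Gamma> t - \<Gamma> (t - 1)) * (norm (z t - x t))\<^sup>2
        \<le> inner (g t) w + (1/2) * \<Gamma> (t - 1) * (norm (w - z (t - 1)))\<^sup>2
               + (1/2) * (\<Gamma> t - \<Gamma> (t - 1)) * (norm (w - x t))\<^sup>2"
      using itT[of t] that by (auto simp: is_minimizer_on_def)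
    show ?thesis
      using vi_quad[of X "z t" v "g t" "\<Gamma> (t - 1)" "z (t - 1)" "\<Gamma> t - \<Gamma> (t - 1)" "x t"]
        m assms(3) zX that by simp
  qed
  have main: "n \<le> T \<Longrightarrow> (\<Sum>t\<in>{1..n}. inner (g t) (x t - y))
     \<le> \<Gamma> 0 / 2 * (norm (y - z 0))\<^sup>2 + (\<Gamma> n - \<Gamma> 0) / 2 * R\<^sup>2 - \<Gamma> n / 2 * (norm (y - z n))\<^sup>2
       + 2 * \<eta> * sqrt (S n)
       - (1/2) * (\<Sum>t\<in>{1..n}. \<Gamma> (t - 1) * ((norm (x t - z (t - 1)))\<^sup>2 + (norm (x (t - 1) - z (t - 1)))\<^sup>2))
       - \<Gamma> n / 2 * (norm (x n - z n))\<^sup>2" for n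
  proof (induction n)
    case 0
    then show ?case using it by (simp add: S0)
  next
    case (Suc n)
    have nT: "n \<le> T" "1 \<le> Suc n" "Suc n \<le> T" using Suc.prems by auto
    note IH = Suc.IH[OF nT(1)]
    note h1 = VIx[OF nT(2,3) zX[OF nT(3)], simplified]
    note h2 = VIz[OF nT(2,3) assms(9), simplified]
    note h3 = VIz[OF nT(2,3) xX[OF nT(3)], simplified]
    note A = step_ineq[OF h1 h2]
    note B = step_close[OF h1 h3]
    have P2: "inner (g (Suc n) - g n) (x (Suc n) - z (Suc n)) \<le> norm (g (Suc n) - g n) * norm (x (Suc n) - z (Suc n))"
      by (rule norm_cauchy_schwarz)
    have bb: "sqrt (S n + (norm (g (Suc n) - g n))\<^sup>2) / \<eta> \<le> \<Gamma> (Suc n)"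
      using Glow[of "Suc n"] by (simp add: SSuc)
    note C = scalar_bound[OF B P2 norm_ge_zero norm_ge_zero bb Snn eta]
    have C': "inner (g (Suc n) - g n) (x (Suc n) - z (Suc n)) \<le> 2 * \<eta> * sqrt (S (Suc n)) - 2 * \<eta> * sqrt (S n)"
      using C by (simp add: SSuc algebra_simps)
    have yx: "(norm (y - x (Suc n)))\<^sup>2 \<le> R\<^sup>2"
      using assms(5) assms(9) xX[OF nT(3)] R0 by (intro power_mono) auto
    have D: "(\<Gamma> (Suc n) - \<Gamma> n) / 2 * (norm (y - x (Suc n)))\<^sup>2 \<le> (\<Gamma> (Suc n) - \<Gamma> n) / 2 * R\<^sup>2"
      using yx Gmono[of n] by (intro mult_left_mono) auto
    have E: "(1/2) * (\<Sum>t\<in>{1..Suc n}. \<Gamma> (t - 1) * ((norm (x t - z (t - 1)))\<^sup>2 + (norm (x (t - 1) - z (t - 1)))\<^sup>2))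
      = (1/2) * (\<Sum>t\<in>{1..n}. \<Gamma> (t - 1) * ((norm (x t - z (t - 1)))\<^sup>2 + (norm (x (t - 1) - z (t - 1)))\<^sup>2))
        + \<Gamma> n / 2 * (norm (x (Suc n) - z n))\<^sup>2 + \<Gamma> n / 2 * (norm (x n - z n))\<^sup>2"
      by (simp add: field_simps)
    have F: "(\<Sum>t\<in>{1..Suc n}. inner (g t) (x t - y)) = (\<Sum>t\<in>{1..n}. inner (g t) (x t - y)) + inner (g (Suc n)) (x (Suc n) - y)"
      by simp
    have G: "(\<Gamma> (Suc n) - \<Gamma> 0) / 2 * R\<^sup>2 = (\<Gamma> n - \<Gamma> 0) / 2 * R\<^sup>2 + (\<Gamma> (Suc n) - \<Gamma> n) / 2 * R\<^sup>2"
      by (simp add: field_simps)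
    show ?case unfolding F E G using IH A C' D by linarith
  qed
  note M = main[OF order_refl]
  have D0: "(norm (y - z 0))\<^sup>2 \<le> R\<^sup>2"
    using assms(5) assms(9) it R0 by (intro power_mono) auto
  have D0': "\<gamma>0 / 2 * (norm (y - z 0))\<^sup>2 \<le> \<gamma>0 / 2 * R\<^sup>2" using D0 g0 by (intro mult_left_mono) auto
  have GT: "\<Gamma> T / 2 * R\<^sup>2 \<le> (\<gamma>0 + sqrt (S T) / \<eta>) / 2 * R\<^sup>2"
    using Gup by (intro mult_right_mono) auto
  have nn1: "0 \<le> \<Gamma> T / 2 * (norm (y - z T))\<^sup>2" using Gnn by simp
  have nn2: "0 \<le> \<Gamma> T / 2 * (norm (x T - z T))\<^sup>2" using Gnn by simp
  have fin: "(\<gamma>0 + sqrt (S T) / \<eta>) / 2 * R\<^sup>2 + 2 * \<eta> * sqrt (S T)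
     = (1/2) * R\<^sup>2 * \<gamma>0 + ((1/2) * R\<^sup>2 / \<eta> + 2 * \<eta>) * sqrt (S T)"
    by (simp add: algebra_simps)
  have "(\<Sum>t\<in>{1..T}. inner (g t) (x t - y))
     \<le> (1/2) * R\<^sup>2 * \<gamma>0 + ((1/2) * R\<^sup>2 / \<eta> + 2 * \<eta>) * sqrt (S T)
       - (1/2) * (\<Sum>t\<in>{1..T}. \<Gamma> (t - 1) * ((norm (x t - z (t - 1)))\<^sup>2 + (norm (x (t - 1) - z (t - 1)))\<^sup>2))"
  proof -
    have eq: "(\<Gamma> T - \<gamma>0) / 2 * R\<^sup>2 = \<Gamma> T / 2 * R\<^sup>2 - \<gamma>0 / 2 * R\<^sup>2" by (simp add: field_simps)
    show ?thesis using M[unfolded G0 eq] D0' GT nn1 nn2 fin by linarith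
  qed
  thus ?thesis unfolding S_def \<Gamma>_def .
qed

end
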